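(* Let $\Lambda:=U(2)^{\oplus 3}\oplus E_8\oplus A_1^{\oplus 2}$ and let $u\in D_\Lambda=\Lambda^\vee/\Lambda$ satisfy $q(u)=1+2\mathbb{Z}$. Then there exists $x\in\Lambda$ with $x^2=-4$, $x.\Lambda=2\mathbb{Z}$ and $u=x/2+\Lambda$.
   Context: $U$ is the hyperbolic plane, $L(n)$ denotes $L$ with form scaled by $n$, ADE root lattices are negative definite. $q\colon D_\Lambda\to\mathbb{Q}/2\mathbb{Z}$ is the discriminant quadratic form $q(y+\Lambda)=y^2+2\mathbb{Z}$. *)

theory Defs
  imports Complex_Main
begin

text \<open>The lattice Lambda = U(2)^3 + E8 + A1^2 (rank 16), realised as Z^16 with
  Gram matrix lam_gram w.r.t. the standard basis e_0..e_15:
  indices 0-5: three copies of U(2) (Gram [[0,2],[2,0]]);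
  indices 6-13: E8 (negative definite, = minus the Cartan matrix, Bourbaki labelling);
  indices 14,15: two copies of A1 (Gram (-2)).\<close>

definition e8_edges :: "nat set set" where
  "e8_edges = {{0,2},{2,3},{3,4},{4,5},{5,6},{6,7},{1,3}}"

definition e8_cartan :: "nat \<Rightarrow> nat \<Rightarrow> int" where
  "e8_cartan a b = (if a = b then 2 else if {a, b} \<in> e8_edges then -1 else 0)"

definition lam_gram :: "nat \<Rightarrow> nat \<Rightarrow> int" where
  "lam_gram i j =
     (if i < 6 \<and> j < 6 then (if i div 2 = j div 2 \<and> i \<noteq> j then 2 else 0)
      else if 6 \<le> i \<and> i < 14 \<and> 6 \<le> j \<and> j < 14 then - e8_cartan (i - 6) (j - 6)
      else if 14 \<le> i \<and> i < 16 \<and> i = j then -2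
      else 0)"

definition lam_bil :: "(nat \<Rightarrow> rat) \<Rightarrow> (nat \<Rightarrow> rat) \<Rightarrow> rat" where
  "lam_bil x y = (\<Sum>i<16. \<Sum>j<16. of_int (lam_gram i j) * x i * y j)"

definition Lam :: "(nat \<Rightarrow> rat) set" where
  "Lam = {x. (\<forall>i. x i \<in> \<int>) \<and> (\<forall>i\<ge>16. x i = 0)}"

definition Lam_dual :: "(nat \<Rightarrow> rat) set" where
  "Lam_dual = {y. (\<forall>i\<ge>16. y i = 0) \<and> (\<forall>z\<in>Lam. lam_bil y z \<in> \<int>)}"

end

theory Submission imports Defs begin
lemma sum16: "(\<Sum>i<(16::nat). f i) = f 0 + f 1 + f 2 + f 3 + f 4 + f 5 + f 6 + f 7 + f 8 + f 9 + f 10 + f 11 + f 12 + f 13 + f 14 + f 15"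
  by (simp add: eval_nat_numeral)
lemma bil_expand: "lam_bil x y =
  2*(x 0*y 1 + x 1*y 0 + x 2*y 3 + x 3*y 2 + x 4*y 5 + x 5*y 4)
  - (2*(x 6*y 6 + x 7*y 7 + x 8*y 8 + x 9*y 9 + x 10*y 10 + x 11*y 11 + x 12*y 12 + x 13*y 13)
     - (x 6*y 8 + x 8*y 6 + x 8*y 9 + x 9*y 8 + x 9*y 10 + x 10*y 9 + x 10*y 11 + x 11*y 10
        + x 11*y 12 + x 12*y 11 + x 12*y 13 + x 13*y 12 + x 7*y 9 + x 9*y 7))
  - 2*x 14*y 14 - 2*x 15*y 15"
  unfolding lam_bil_def sum16
  by (simp add: lam_gram_def e8_cartan_def e8_edges_def doubleton_eq_iff algebra_simps)


definition sg0 :: "int \<Rightarrow> int \<Rightarrow> int \<Rightarrow> int \<Rightarrow> int" where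
  "sg0 r2 r3 r4 r5 = (if r2*r3 + r4*r5 \<ge> 1 then 1 else -1)"
definition sg2 :: "int \<Rightarrow> int \<Rightarrow> int \<Rightarrow> int \<Rightarrow> int" where
  "sg2 r0 r1 r2 r3 = (if r0*r1 = 0 \<and> r2*r3 = 1 then 1 else -1)"

lemma FIN:
  fixes p0 p1 p2 p3 p4 p5 p14 p15 :: bool
  defines "r0 \<equiv> of_bool p0 :: int" and "r1 \<equiv> of_bool p1 :: int" and "r2 \<equiv> of_bool p2 :: int"
    and "r3 \<equiv> of_bool p3 :: int" and "r4 \<equiv> of_bool p4 :: int" and "r5 \<equiv> of_bool p5 :: int"
    and "r14 \<equiv> of_bool p14 :: int" and "r15 \<equiv> of_bool p15 :: int"
  assumes "2*(r0*r1+r2*r3+r4*r5) - r14 - r15 - 2 = 4*J"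
  shows "4*(r0*(r1*sg0 r2 r3 r4 r5) + r2*(-r3) + r4*(r5*sg2 r0 r1 r2 r3)) - 2*(r14*r14+r15*r15) = -4
     \<and> (r14 = 1 \<or> r0 = 1 \<or> r2 = 1 \<or> r4 = 1)
     \<and> even (r1 - r1*sg0 r2 r3 r4 r5) \<and> even (r3 - (-r3)) \<and> even (r5 - r5*sg2 r0 r1 r2 r3)"
  using assms(9) unfolding assms(1-8) sg0_def sg2_def
  by (cases p0; cases p1; cases p2; cases p3; cases p4; cases p5; cases p14; cases p15; simp; presburger)

lemma COORD:
  fixes yv :: rat
  assumes "2*yv = of_int a" and "even (a - s)"
  shows "yv - of_int s / 2 \<in> \<int>"
proof -
  from assms(2) obtain t where t: "a - s = 2*t" by (elim evenE)
  have "yv - of_int s / 2 = of_int t"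
    using assms(1) arg_cong[OF t, of "of_int :: int \<Rightarrow> rat"] by (simp add: field_simps)
  then show ?thesis by simp
qed

lemma lt16: "(i::nat) < 16 \<Longrightarrow> i = 0 \<or> i = 1 \<or> i = 2 \<or> i = 3 \<or> i = 4 \<or> i = 5 \<or> i = 6 \<or> i = 7 \<or> i = 8
   \<or> i = 9 \<or> i = 10 \<or> i = 11 \<or> i = 12 \<or> i = 13 \<or> i = 14 \<or> i = 15"
  by presburger

theorem lemma3p3:
  assumes "y \<in> Lam_dual"
    and "\<exists>k::int. lam_bil y y = 2 * of_int k + 1"
  shows "\<exists>x\<in>Lam. lam_bil x x = -4
            \<and> {lam_bil x z | z. z \<in> Lam} = {2 * of_int k | k::int. True}
            \<and> (\<lambda>i. y i - x i / 2) \<in> Lam"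
proof -
  have yz: "\<forall>i\<ge>16. y i = 0" and yd: "\<forall>z\<in>Lam. lam_bil y z \<in> \<int>"
    using assms(1) by (auto simp: Lam_dual_def)
  define e where "e j = (\<lambda>i. if i = j then 1 else (0::rat))" for j :: nat
  have eL: "e j \<in> Lam" if "j < 16" for j using that by (auto simp: e_def Lam_def)
  have K: "lam_bil y (e j) \<in> \<int>" if "j<16" for j using yd eL that by blast
  have "2*y 1 \<in> \<int>" using K[of 0] by (simp add: bil_expand e_def)
  then obtain a1 where a1: "2*y 1 = of_int a1" by (elim Ints_cases)
  have "2*y 0 \<in> \<int>" using K[of 1] by (simp add: bil_expand e_def)
  then obtain a0 where a0: "2*y 0 = of_int a0" by (elim Ints_cases)
  have "2*y 3 \<in> \<int>" using K[of 2] by (simp add: bil_expand e_def)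
  then obtain a3 where a3: "2*y 3 = of_int a3" by (elim Ints_cases)
  have "2*y 2 \<in> \<int>" using K[of 3] by (simp add: bil_expand e_def)
  then obtain a2 where a2: "2*y 2 = of_int a2" by (elim Ints_cases)
  have "2*y 5 \<in> \<int>" using K[of 4] by (simp add: bil_expand e_def)
  then obtain a5 where a5: "2*y 5 = of_int a5" by (elim Ints_cases)
  have "2*y 4 \<in> \<int>" using K[of 5] by (simp add: bil_expand e_def)
  then obtain a4 where a4: "2*y 4 = of_int a4" by (elim Ints_cases)
  have "-(2*y 14) \<in> \<int>" using K[of 14] by (simp add: bil_expand e_def)
  from Ints_minus[OF this] have "2*y 14 \<in> \<int>" by simp
  then obtain a14 where a14: "2*y 14 = of_int a14" by (elim Ints_cases)
  have "-(2*y 15) \<in> \<int>" using K[of 15] by (simp add: bil_expand e_def)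
  from Ints_minus[OF this] have "2*y 15 \<in> \<int>" by simp
  then obtain a15 where a15: "2*y 15 = of_int a15" by (elim Ints_cases)
  have "y 6 = -(4*lam_bil y (e 6) + 5*lam_bil y (e 7) + 7*lam_bil y (e 8) + 10*lam_bil y (e 9) + 8*lam_bil y (e 10) + 6*lam_bil y (e 11) + 4*lam_bil y (e 12) + 2*lam_bil y (e 13))"
    by (simp add: bil_expand e_def algebra_simps)
  also have "\<dots> \<in> \<int>"
    by (intro Ints_minus Ints_add Ints_mult Ints_numeral K) simp_all
  finally obtain g6 where g6: "y 6 = of_int g6" by (elim Ints_cases)
  have "y 7 = -(5*lam_bil y (e 6) + 8*lam_bil y (e 7) + 10*lam_bil y (e 8) + 15*lam_bil y (e 9) + 12*lam_bil y (e 10) + 9*lam_bil y (e 11) + 6*lam_bil y (e 12) + 3*lam_bil y (e 13))"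
    by (simp add: bil_expand e_def algebra_simps)
  also have "\<dots> \<in> \<int>"
    by (intro Ints_minus Ints_add Ints_mult Ints_numeral K) simp_all
  finally obtain g7 where g7: "y 7 = of_int g7" by (elim Ints_cases)
  have "y 8 = -(7*lam_bil y (e 6) + 10*lam_bil y (e 7) + 14*lam_bil y (e 8) + 20*lam_bil y (e 9) + 16*lam_bil y (e 10) + 12*lam_bil y (e 11) + 8*lam_bil y (e 12) + 4*lam_bil y (e 13))"
    by (simp add: bil_expand e_def algebra_simps)
  also have "\<dots> \<in> \<int>"
    by (intro Ints_minus Ints_add Ints_mult Ints_numeral K) simp_all
  finally obtain g8 where g8: "y 8 = of_int g8" by (elim Ints_cases)
  have "y 9 = -(10*lam_bil y (e 6) + 15*lam_bil y (e 7) + 20*lam_bil y (e 8) + 30*lam_bil y (e 9) + 24*lam_bil y (e 10) + 18*lam_bil y (e 11) + 12*lam_bil y (e 12) + 6*lam_bil y (e 13))"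
    by (simp add: bil_expand e_def algebra_simps)
  also have "\<dots> \<in> \<int>"
    by (intro Ints_minus Ints_add Ints_mult Ints_numeral K) simp_all
  finally obtain g9 where g9: "y 9 = of_int g9" by (elim Ints_cases)
  have "y 10 = -(8*lam_bil y (e 6) + 12*lam_bil y (e 7) + 16*lam_bil y (e 8) + 24*lam_bil y (e 9) + 20*lam_bil y (e 10) + 15*lam_bil y (e 11) + 10*lam_bil y (e 12) + 5*lam_bil y (e 13))"
    by (simp add: bil_expand e_def algebra_simps)
  also have "\<dots> \<in> \<int>"
    by (intro Ints_minus Ints_add Ints_mult Ints_numeral K) simp_all
  finally obtain g10 where g10: "y 10 = of_int g10" by (elim Ints_cases)
  have "y 11 = -(6*lam_bil y (e 6) + 9*lam_bil y (e 7) + 12*lam_bil y (e 8) + 18*lam_bil y (e 9) + 15*lam_bil y (e 10) + 12*lam_bil y (e 11) + 8*lam_bil y (e 12) + 4*lam_bil y (e 13))"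
    by (simp add: bil_expand e_def algebra_simps)
  also have "\<dots> \<in> \<int>"
    by (intro Ints_minus Ints_add Ints_mult Ints_numeral K) simp_all
  finally obtain g11 where g11: "y 11 = of_int g11" by (elim Ints_cases)
  have "y 12 = -(4*lam_bil y (e 6) + 6*lam_bil y (e 7) + 8*lam_bil y (e 8) + 12*lam_bil y (e 9) + 10*lam_bil y (e 10) + 8*lam_bil y (e 11) + 6*lam_bil y (e 12) + 3*lam_bil y (e 13))"
    by (simp add: bil_expand e_def algebra_simps)
  also have "\<dots> \<in> \<int>"
    by (intro Ints_minus Ints_add Ints_mult Ints_numeral K) simp_all
  finally obtain g12 where g12: "y 12 = of_int g12" by (elim Ints_cases)
  have "y 13 = -(2*lam_bil y (e 6) + 3*lam_bil y (e 7) + 4*lam_bil y (e 8) + 6*lam_bil y (e 9) + 5*lam_bil y (e 10) + 4*lam_bil y (e 11) + 3*lam_bil y (e 12) + 2*lam_bil y (e 13))"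
    by (simp add: bil_expand e_def algebra_simps)
  also have "\<dots> \<in> \<int>"
    by (intro Ints_minus Ints_add Ints_mult Ints_numeral K) simp_all
  finally obtain g13 where g13: "y 13 = of_int g13" by (elim Ints_cases)
  have y0: "y 0 = of_int a0 / 2" using a0 by simp
  have y1: "y 1 = of_int a1 / 2" using a1 by simp
  have y2: "y 2 = of_int a2 / 2" using a2 by simp
  have y3: "y 3 = of_int a3 / 2" using a3 by simp
  have y4: "y 4 = of_int a4 / 2" using a4 by simp
  have y5: "y 5 = of_int a5 / 2" using a5 by simp
  have y14: "y 14 = of_int a14 / 2" using a14 by simp
  have y15: "y 15 = of_int a15 / 2" using a15 by simp
  obtain k where k: "lam_bil y y = 2 * of_int k + 1" using assms(2) by blast
  define M where "M = g6^2+g7^2+g8^2+g9^2+g10^2+g11^2+g12^2+g13^2 - (g6*g8 + g8*g9 + g9*g10 + g10*g11 + g11*g12 + g12*g13 + g7*g9)"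
  have "lam_bil y y = of_int (a0*a1+a2*a3+a4*a5) - 2*of_int M - of_int (a14^2+a15^2)/2"
    unfolding bil_expand M_def y0 y1 y2 y3 y4 y5 y14 y15 g6 g7 g8 g9 g10 g11 g12 g13
    by (simp add: field_simps power2_eq_square)
  with k have "(of_int (2*(a0*a1+a2*a3+a4*a5) - 4*M - (a14^2+a15^2)) :: rat) = of_int (4*k+2)"
    by (simp add: field_simps)
  then have eqI: "2*(a0*a1+a2*a3+a4*a5) - 4*M - (a14^2+a15^2) = 4*k+2"
    by (simp only: of_int_eq_iff)
  define r0 where "r0 = (of_bool (odd a0) :: int)"
  define m0 where "m0 = a0 div 2"
  have am0: "a0 = 2*m0 + r0" unfolding r0_def m0_def by (simp add: mod_2_eq_odd[symmetric])
  define r1 where "r1 = (of_bool (odd a1) :: int)"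
  define m1 where "m1 = a1 div 2"
  have am1: "a1 = 2*m1 + r1" unfolding r1_def m1_def by (simp add: mod_2_eq_odd[symmetric])
  define r2 where "r2 = (of_bool (odd a2) :: int)"
  define m2 where "m2 = a2 div 2"
  have am2: "a2 = 2*m2 + r2" unfolding r2_def m2_def by (simp add: mod_2_eq_odd[symmetric])
  define r3 where "r3 = (of_bool (odd a3) :: int)"
  define m3 where "m3 = a3 div 2"
  have am3: "a3 = 2*m3 + r3" unfolding r3_def m3_def by (simp add: mod_2_eq_odd[symmetric])
  define r4 where "r4 = (of_bool (odd a4) :: int)"
  define m4 where "m4 = a4 div 2"
  have am4: "a4 = 2*m4 + r4" unfolding r4_def m4_def by (simp add: mod_2_eq_odd[symmetric])
  define r5 where "r5 = (of_bool (odd a5) :: int)"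
  define m5 where "m5 = a5 div 2"
  have am5: "a5 = 2*m5 + r5" unfolding r5_def m5_def by (simp add: mod_2_eq_odd[symmetric])
  define r14 where "r14 = (of_bool (odd a14) :: int)"
  define m14 where "m14 = a14 div 2"
  have am14: "a14 = 2*m14 + r14" unfolding r14_def m14_def by (simp add: mod_2_eq_odd[symmetric])
  define r15 where "r15 = (of_bool (odd a15) :: int)"
  define m15 where "m15 = a15 div 2"
  have am15: "a15 = 2*m15 + r15" unfolding r15_def m15_def by (simp add: mod_2_eq_odd[symmetric])
  have r14sq: "r14*r14 = r14" and r15sq: "r15*r15 = r15" unfolding r14_def r15_def by simp_all
  have Jeq: "2*(r0*r1+r2*r3+r4*r5) - r14 - r15 - 2 = 4*(k + M - (2*(m0*m1+m2*m3+m4*m5) + (m0*r1+m1*r0+m2*r3+m3*r2+m4*r5+m5*r4) - m14^2 - m14*r14 - m15^2 - m15*r15))"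
    using eqI am0 am1 am2 am3 am4 am5 am14 am15 r14sq r15sq by algebra
  have F: "4*(r0*(r1*sg0 r2 r3 r4 r5) + r2*(-r3) + r4*(r5*sg2 r0 r1 r2 r3)) - 2*(r14*r14+r15*r15) = -4
     \<and> (r14 = 1 \<or> r0 = 1 \<or> r2 = 1 \<or> r4 = 1)
     \<and> even (r1 - r1*sg0 r2 r3 r4 r5) \<and> even (r3 - (-r3)) \<and> even (r5 - r5*sg2 r0 r1 r2 r3)"
    using FIN[of "odd a0" "odd a1" "odd a2" "odd a3" "odd a4" "odd a5" "odd a14" "odd a15"] Jeq
    unfolding r0_def r1_def r2_def r3_def r4_def r5_def r14_def r15_def by blast
  define s1 where "s1 = r1*sg0 r2 r3 r4 r5"
  define s5 where "s5 = r5*sg2 r0 r1 r2 r3"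
  define X where "X = (\<lambda>i::nat. if i = 0 then r0 else if i = 1 then s1 else if i = 2 then r2
     else if i = 3 then -r3 else if i = 4 then r4 else if i = 5 then s5 else if i = 14 then r14
     else if i = 15 then r15 else 0)"
  define x where "x = (\<lambda>i. (of_int (X i) :: rat))"
  have xv: "x 0 = of_int r0" "x 1 = of_int s1" "x 2 = of_int r2" "x 3 = - of_int r3"
     "x 4 = of_int r4" "x 5 = of_int s5" "x 14 = of_int r14" "x 15 = of_int r15"
     "x 6 = 0" "x 7 = 0" "x 8 = 0" "x 9 = 0" "x 10 = 0" "x 11 = 0" "x 12 = 0" "x 13 = 0"
    by (simp_all add: x_def X_def)
  have xS1: "x (Suc 0) = of_int s1" by (simp add: x_def X_def)
  have xL: "x \<in> Lam" unfolding Lam_def x_def X_def by auto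
  have norm: "lam_bil x x = -4"
  proof -
    have "lam_bil x x = of_int (4*(r0*s1 + r2*(-r3) + r4*s5) - 2*(r14*r14+r15*r15))"
      unfolding bil_expand xv by (simp add: algebra_simps)
    also have "\<dots> = -4" using F unfolding s1_def s5_def by simp
    finally show ?thesis .
  qed
  have sub: "{lam_bil x z | z. z \<in> Lam} \<subseteq> {2 * of_int k | k::int. True}"
  proof
    fix w assume "w \<in> {lam_bil x z | z. z \<in> Lam}"
    then obtain z where z: "z \<in> Lam" and w: "w = lam_bil x z" by blast
    have zi: "z i \<in> \<int>" for i using z by (simp add: Lam_def)
    have "of_int r0 * z 1 + of_int s1 * z 0 + of_int r2 * z 3 - of_int r3 * z 2 + of_int r4 * z 5
       + of_int s5 * z 4 - of_int r14 * z 14 - of_int r15 * z 15 \<in> \<int>"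
      by (intro Ints_add Ints_diff Ints_mult Ints_of_int zi)
    then obtain t where t: "of_int r0 * z 1 + of_int s1 * z 0 + of_int r2 * z 3 - of_int r3 * z 2 + of_int r4 * z 5
       + of_int s5 * z 4 - of_int r14 * z 14 - of_int r15 * z 15 = of_int t" by (elim Ints_cases)
    have "w = 2 * of_int t" unfolding w bil_expand xv t[symmetric] by (simp add: algebra_simps)
    then show "w \<in> {2 * of_int k | k::int. True}" by blast
  qed
  have "\<exists>z0\<in>Lam. lam_bil x z0 = 2"
  proof -
    have c: "r14 = 1 \<or> r0 = 1 \<or> r2 = 1 \<or> r4 = 1" using F by blast
    show ?thesis
    proof (rule disjE[OF c])
      assume h: "r14 = 1"
      show ?thesis by (rule bexI[of _ "\<lambda>i. - e 14 i"]) (auto simp: bil_expand e_def xv h Lam_def)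
    next
      assume "r0 = 1 \<or> r2 = 1 \<or> r4 = 1"
      then show ?thesis
      proof (elim disjE)
        assume h: "r0 = 1"
        show ?thesis by (rule bexI[of _ "e 1"]) (auto simp: bil_expand e_def xv h Lam_def)
      next
        assume h: "r2 = 1"
        show ?thesis by (rule bexI[of _ "e 3"]) (auto simp: bil_expand e_def xv h Lam_def)
      next
        assume h: "r4 = 1"
        show ?thesis by (rule bexI[of _ "e 5"]) (auto simp: bil_expand e_def xv h Lam_def)
      qed
    qed
  qed
  then obtain z0 where z0L: "z0 \<in> Lam" and z0: "lam_bil x z0 = 2" by blast
  have sup: "{2 * of_int k | k::int. True} \<subseteq> {lam_bil x z | z. z \<in> Lam}"
  proof
    fix w :: rat assume "w \<in> {2 * of_int k | k::int. True}"
    then obtain c :: int where w: "w = 2 * of_int c" by blast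
    have "lam_bil x (\<lambda>i. of_int c * z0 i) = of_int c * lam_bil x z0"
      unfolding bil_expand by (simp add: algebra_simps)
    moreover have "(\<lambda>i. of_int c * z0 i) \<in> Lam" using z0L by (auto simp: Lam_def)
    ultimately show "w \<in> {lam_bil x z | z. z \<in> Lam}" using w z0 by (metis (mono_tags, lifting) mult.commute mem_Collect_eq)
  qed
  have ev: "even (a0 - r0)" "even (a1 - s1)" "even (a2 - r2)" "even (a3 - (-r3))"
     "even (a4 - r4)" "even (a5 - s5)" "even (a14 - r14)" "even (a15 - r15)"
  proof -
    have h1: "even (r1 - s1)" "even (r3 - (-r3))" "even (r5 - s5)" using F unfolding s1_def s5_def by blast+
    show "even (a0 - r0)" "even (a2 - r2)" "even (a4 - r4)" "even (a14 - r14)" "even (a15 - r15)"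
      using am0 am2 am4 am14 am15 by simp_all
    show "even (a1 - s1)" using am1 h1(1) by (metis add_diff_eq dvd_add dvd_triv_left)
    show "even (a3 - (-r3))" using am3 h1(2) by (metis add_diff_eq dvd_add dvd_triv_left)
    show "even (a5 - s5)" using am5 h1(3) by (metis add_diff_eq dvd_add dvd_triv_left)
  qed
  have shift: "(\<lambda>i. y i - x i / 2) \<in> Lam"
    unfolding Lam_def
  proof (intro CollectI conjI allI impI)
    fix i :: nat
    assume "16 \<le> i" then show "y i - x i / 2 = 0" using yz by (simp add: x_def X_def)
  next
    fix i :: nat
    show "y i - x i / 2 \<in> \<int>"
    proof (cases "i < 16")
      case False then show ?thesis using yz by (simp add: x_def X_def)
    next
      case True
      then show ?thesis
        using lt16[OF True] COORD[OF a0 ev(1)] COORD[OF a1 ev(2)] COORD[OF a2 ev(3)] COORD[OF a3 ev(4)]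
          COORD[OF a4 ev(5)] COORD[OF a5 ev(6)] COORD[OF a14 ev(7)] COORD[OF a15 ev(8)]
        by (elim disjE) (simp_all add: xv xS1 g6 g7 g8 g9 g10 g11 g12 g13)
    qed
  qed
  show ?thesis
    by (rule bexI[OF _ xL]) (use norm sub sup shift in blast)
qed

end
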